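(* Let $G$ be a reaction network with one-dimensional stoichiometric subspace. If for a rate-constant vector $\kappa^*$ and a total-constant vector $c^*$, $G$ has exactly $N$ positive steady states $x^{(1)},\dots,x^{(N)}$ in $\mathcal P_{c^*}$ with $x^{(1)}_1<\dots<x^{(N)}_1$, then (a) for any $1\le i\le N-1$, $x^{(i)}$ and $x^{(i+1)}$ are not both stable, and (b) at most $\lceil N/2\rceil$ of these positive steady states are stable.
   Context: A reaction network $G$ has species $X_1,\dots,X_s$ and $m$ reactions $\sum_{i}\alpha_{ij}X_i\to\sum_i\beta_{ij}X_i$, $\alpha_{ij},\beta_{ij}\in\mathbb Z_{\ge0}$, $(\alpha_{1j},\dots,\alpha_{sj})\neq(\beta_{1j},\dots,\beta_{sj})$. $\mathcal N$ has entries $\beta_{ij}-\alpha_{ij}$, $S=\mathrm{im}\,\mathcal N$. For $\kappa\in\mathbb R^m_{>0}$, $f(\kappa;x)=\mathcal N(\kappa_1\prod_i x_i^{\alpha_{i1}},\dots,\kappa_m\prod_i x_i^{\alpha_{im}})^\top$. Since $S$ is one-dimensional, species are labelled so that $\beta_{11}-\alpha_{11}\ne0$, and for $c\in\mathbb R^{s-1}$, $\mathcal P_c=\{x\in\mathbb R^s_{\ge0}:(\beta_{i1}-\alpha_{i1})x_1-(\beta_{11}-\alpha_{11})x_i=c_{i-1},\ i=2,\dots,s\}$. A steady state is $x\ge0$ with $f(\kappa;x)=0$; positive if $x\in\mathbb R^s_{>0}$; nondegenerate if $\mathrm{Jac}_f(x)(S)=S$; stable if nondegenerate and all nonzero eigenvalues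 of $\mathrm{Jac}_f(x)$ have negative real parts. *)

theory Defs
  imports "HOL-Analysis.Analysis"
begin

text \<open>A reaction network with species indexed by the finite type 's and reactions
indexed by the finite type 'r. alpha i j and beta i j are the stoichiometric
coefficients of species i in the reactant/product complex of reaction j.\<close>

definition stoich_matrix :: "('s::finite \<Rightarrow> 'r::finite \<Rightarrow> nat) \<Rightarrow> ('s \<Rightarrow> 'r \<Rightarrow> nat) \<Rightarrow> real^'r^'s" where
  "stoich_matrix alpha beta = (\<chi> i j. real (beta i j) - real (alpha i j))"

definition stoich_space :: "('s::finite \<Rightarrow> 'r::finite \<Rightarrow> nat) \<Rightarrow> ('s \<Rightarrow> 'r \<Rightarrow> nat) \<Rightarrow> (real^'s) set" where
  "stoich_space alpha beta = range (\<lambda>y. stoich_matrix alpha beta *v y)"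

definition valid_network :: "('s::finite \<Rightarrow> 'r::finite \<Rightarrow> nat) \<Rightarrow> ('s \<Rightarrow> 'r \<Rightarrow> nat) \<Rightarrow> bool" where
  "valid_network alpha beta \<longleftrightarrow> (\<forall>j. \<exists>i. alpha i j \<noteq> beta i j)"

definition mass_action :: "('s::finite \<Rightarrow> 'r::finite \<Rightarrow> nat) \<Rightarrow> ('s \<Rightarrow> 'r \<Rightarrow> nat) \<Rightarrow> real^'r \<Rightarrow> real^'s \<Rightarrow> real^'s" where
  "mass_action alpha beta \<kappa> x =
     stoich_matrix alpha beta *v (\<chi> j. \<kappa>$j * (\<Prod>i\<in>UNIV. (x$i) ^ alpha i j))"

definition jacobian :: "('s::finite \<Rightarrow> 'r::finite \<Rightarrow> nat) \<Rightarrow> ('s \<Rightarrow> 'r \<Rightarrow> nat) \<Rightarrow> real^'r \<Rightarrow> real^'s \<Rightarrow> real^'s^'s" where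
  "jacobian alpha beta \<kappa> x =
     (\<chi> i l. deriv (\<lambda>t. mass_action alpha beta \<kappa> (\<chi> k. if k = l then t else x$k) $ i) (x$l))"

definition steady_state :: "('s::finite \<Rightarrow> 'r::finite \<Rightarrow> nat) \<Rightarrow> ('s \<Rightarrow> 'r \<Rightarrow> nat) \<Rightarrow> real^'r \<Rightarrow> real^'s \<Rightarrow> bool" where
  "steady_state alpha beta \<kappa> x \<longleftrightarrow> (\<forall>i. x$i \<ge> 0) \<and> mass_action alpha beta \<kappa> x = 0"

definition positive_steady_state :: "('s::finite \<Rightarrow> 'r::finite \<Rightarrow> nat) \<Rightarrow> ('s \<Rightarrow> 'r \<Rightarrow> nat) \<Rightarrow> real^'r \<Rightarrow> real^'s \<Rightarrow> bool" where
  "positive_steady_state alpha beta \<kappa> x \<longleftrightarrow> steady_state alpha beta \<kappa> x \<and> (\<forall>i. x$i > 0)"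

definition nondegenerate :: "('s::finite \<Rightarrow> 'r::finite \<Rightarrow> nat) \<Rightarrow> ('s \<Rightarrow> 'r \<Rightarrow> nat) \<Rightarrow> real^'r \<Rightarrow> real^'s \<Rightarrow> bool" where
  "nondegenerate alpha beta \<kappa> x \<longleftrightarrow>
     steady_state alpha beta \<kappa> x \<and>
     (\<lambda>v. jacobian alpha beta \<kappa> x *v v) ` stoich_space alpha beta = stoich_space alpha beta"

definition is_eigenvalue :: "real^'n^'n \<Rightarrow> complex \<Rightarrow> bool" where
  "is_eigenvalue A \<mu> \<longleftrightarrow>
     (\<exists>v::complex^'n. v \<noteq> 0 \<and> (\<chi> i j. complex_of_real (A$i$j)) *v v = \<mu> *s v)"

definition stable_steady_state :: "('s::finite \<Rightarrow> 'r::finite \<Rightarrow> nat) \<Rightarrow> ('s \<Rightarrow> 'r \<Rightarrow> nat) \<Rightarrow> real^'r \<Rightarrow> real^'s \<Rightarrow> bool" where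
  "stable_steady_state alpha beta \<kappa> x \<longleftrightarrow>
     nondegenerate alpha beta \<kappa> x \<and>
     (\<forall>\<mu>. is_eigenvalue (jacobian alpha beta \<kappa> x) \<mu> \<and> \<mu> \<noteq> 0 \<longrightarrow> Re \<mu> < 0)"

text \<open>Species a plays the role of X_1 and
reaction r1 the role of the first reaction, with N_{a,r1} \<noteq> 0; c is indexed by
the remaining species (its value at a is irrelevant).\<close>
definition compat_class :: "('s::finite \<Rightarrow> 'r::finite \<Rightarrow> nat) \<Rightarrow> ('s \<Rightarrow> 'r \<Rightarrow> nat) \<Rightarrow> 's \<Rightarrow> 'r \<Rightarrow> ('s \<Rightarrow> real) \<Rightarrow> (real^'s) set" where
  "compat_class alpha beta a r1 c =
     {x. (\<forall>i. x$i \<ge> 0) \<and>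
         (\<forall>i. i \<noteq> a \<longrightarrow>
            stoich_matrix alpha beta $ i $ r1 * x$a - stoich_matrix alpha beta $ a $ r1 * x$i = c i)}"

end

theory Submission
  imports Defs
begin


lemma stoich_struct:
  fixes alpha beta :: "'s::finite \<Rightarrow> 'r::finite \<Rightarrow> nat"
  assumes dim1: "dim (stoich_space alpha beta) = 1"
    and va: "stoich_matrix alpha beta $ a $ r1 \<noteq> 0"
  defines "v \<equiv> (\<chi> i. stoich_matrix alpha beta $ i $ r1)"
  shows "stoich_space alpha beta = range (\<lambda>s. s *\<^sub>R v)"
    and "\<exists>lam. \<forall>i j. stoich_matrix alpha beta $ i $ j = lam j * v $ i"
proof -
  let ?N = "stoich_matrix alpha beta"
  have sub: "subspace (stoich_space alpha beta)"
    unfolding stoich_space_def by (rule linear_subspace_image) (auto intro: subspace_UNIV)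
  have colS: "(\<chi> i. ?N $ i $ j) \<in> stoich_space alpha beta" for j
  proof -
    have "?N *v axis j 1 = (\<chi> i. ?N $ i $ j)"
      by (simp add: matrix_vector_mult_basis column_def)
    then show ?thesis unfolding stoich_space_def by (metis rangeI)
  qed
  have v0: "v \<noteq> 0" using va by (auto simp: v_def vec_eq_iff)
  have vS: "v \<in> stoich_space alpha beta" using colS v_def by simp
  have "span {v} = span (stoich_space alpha beta)"
    by (rule dim_eq_span) (use vS v0 dim1 in auto)
  then have spanv: "span {v} = stoich_space alpha beta" using sub by (simp add: span_eq_iff)
  then show S: "stoich_space alpha beta = range (\<lambda>s. s *\<^sub>R v)"
    by (simp add: span_singleton)
  have "\<forall>j. \<exists>l. (\<chi> i. ?N $ i $ j) = l *\<^sub>R v" using colS S by blast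
  then obtain lam where "\<forall>j. (\<chi> i. ?N $ i $ j) = lam j *\<^sub>R v" by metis
  then have "\<forall>i j. ?N $ i $ j = lam j * v $ i" by (auto simp: vec_eq_iff)
  then show "\<exists>lam. \<forall>i j. ?N $ i $ j = lam j * v $ i" by blast
qed


lemma card_no_consec:
  fixes A :: "nat set"
  assumes "A \<subseteq> {1..n}" and "\<And>i. i \<in> A \<Longrightarrow> Suc i \<notin> A"
  shows "card A \<le> nat \<lceil>real n / 2\<rceil>"
proof -
  have "inj_on (\<lambda>i. (i+1) div 2) A"
  proof (rule inj_onI)
    fix i j assume ij: "i \<in> A" "j \<in> A" "(i+1) div 2 = (j+1) div 2"
    show "i = j"
    proof (rule ccontr)
      assume "i \<noteq> j"
      with ij(3) have "j = Suc i \<or> i = Suc j" by presburger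
      then show False using assms(2) ij by blast
    qed
  qed
  moreover have "(\<lambda>i. (i+1) div 2) ` A \<subseteq> {1..(n+1) div 2}"
  proof
    fix y assume "y \<in> (\<lambda>i. (i+1) div 2) ` A"
    then obtain i where i: "i \<in> A" "y = (i+1) div 2" by blast
    then have "1 \<le> i" "i \<le> n" using assms(1) by auto
    then show "y \<in> {1..(n+1) div 2}" using i(2) div_le_mono[of "i+1" "n+1" 2] by auto
  qed
  ultimately have "card A \<le> card {1..(n+1) div 2}"
    by (metis card_image card_mono finite_atLeastAtMost)
  also have "\<dots> = (n+1) div 2" by simp
  also have "\<dots> = nat \<lceil>real n / 2\<rceil>"
  proof -
    have "\<lceil>real n / 2\<rceil> = int ((n+1) div 2)"
    proof (rule ceiling_unique)
      show "real_of_int (int ((n + 1) div 2)) - 1 < real n / 2" by (cases "even n") (auto elim!: evenE oddE)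
      show "real n / 2 \<le> real_of_int (int ((n + 1) div 2))" by (cases "even n") (auto elim!: evenE oddE)
    qed
    then show ?thesis by simp
  qed
  finally show ?thesis .
qed


lemma line_deriv:
  fixes g :: "real^'s::finite \<Rightarrow> real"
  assumes "(g has_derivative G) (at x)"
  shows "((\<lambda>t. g (\<chi> k. if k = l then t else x$k)) has_real_derivative G (axis l 1)) (at (x$l))"
proof -
  have eq: "\<And>t. (\<chi> k. if k = l then t else x$k) = x + (t - x$l) *\<^sub>R axis l 1"
    by (auto simp: vec_eq_iff axis_def)
  have "((\<lambda>t. x + (t - x$l) *\<^sub>R axis l (1::real)) has_derivative (\<lambda>h. h *\<^sub>R axis l 1)) (at (x$l))"
    by (auto intro!: derivative_eq_intros)
  moreover have "x + (x$l - x$l) *\<^sub>R axis l 1 = x" by simp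
  ultimately have "((\<lambda>t. g (x + (t - x$l) *\<^sub>R axis l 1)) has_derivative (\<lambda>h. G (h *\<^sub>R axis l 1))) (at (x$l))"
    using has_derivative_compose[where g=g and g'=G] assms by (metis (no_types) comp_def)
  moreover have "linear G" using assms has_derivative_linear by blast
  ultimately have "((\<lambda>t. g (x + (t - x$l) *\<^sub>R axis l 1)) has_derivative (\<lambda>h. h * G (axis l 1))) (at (x$l))"
    by (simp add: linear_scale)
  moreover have "(\<lambda>h. h * G (axis l 1)) = (*) (G (axis l 1))" by (auto simp: fun_eq_iff)
  ultimately show ?thesis unfolding has_field_derivative_def eq by simp
qed

lemma segment_deriv:
  fixes g :: "real^'s::finite \<Rightarrow> real"
  assumes "(g has_derivative G) (at (x + t0 *\<^sub>R d))"
  shows "((\<lambda>t. g (x + t *\<^sub>R d)) has_real_derivative G d) (at t0)"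
proof -
  have "((\<lambda>t. x + t *\<^sub>R d) has_derivative (\<lambda>h. h *\<^sub>R d)) (at t0)"
    by (auto intro!: derivative_eq_intros)
  then have "((\<lambda>t. g (x + t *\<^sub>R d)) has_derivative (\<lambda>h. G (h *\<^sub>R d))) (at t0)"
    using has_derivative_compose[where g=g and g'=G] assms by (metis (no_types) comp_def)
  moreover have "linear G" using assms has_derivative_linear by blast
  ultimately have "((\<lambda>t. g (x + t *\<^sub>R d)) has_derivative (\<lambda>h. h * G d)) (at t0)"
    by (simp add: linear_scale)
  moreover have "(\<lambda>h. h * G d) = (*) (G d)" by (auto simp: fun_eq_iff)
  ultimately show ?thesis unfolding has_field_derivative_def by simp
qed


lemma mass_g:
  fixes alpha beta :: "'s::finite \<Rightarrow> 'r::finite \<Rightarrow> nat"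
  assumes "\<forall>i j. stoich_matrix alpha beta $ i $ j = lam j * v $ i"
  shows "mass_action alpha beta \<kappa> x =
     (\<Sum>j\<in>UNIV. lam j * (\<kappa>$j * (\<Prod>i\<in>UNIV. (x$i) ^ alpha i j))) *\<^sub>R v"
  using assms by (simp add: mass_action_def matrix_vector_mult_def vec_eq_iff) (simp add: sum_distrib_left mult_ac)

lemma vnth_deriv: "((\<lambda>x::real^'s::finite. x$i) has_derivative (\<lambda>h. h$i)) F"
  by (rule bounded_linear_imp_has_derivative) (rule bounded_linear_vec_nth)

lemma g_diff:
  fixes alpha :: "'s::finite \<Rightarrow> 'r::finite \<Rightarrow> nat"
  shows "\<exists>G. ((\<lambda>x::real^'s. \<Sum>j\<in>UNIV. lam j * (\<kappa>$j * (\<Prod>i\<in>UNIV. (x$i) ^ alpha i j))) has_derivative G) (at x)"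
  by (rule exI) (rule derivative_intros | rule vnth_deriv)+

lemma g_cont:
  fixes alpha :: "'s::finite \<Rightarrow> 'r::finite \<Rightarrow> nat"
  shows "continuous_on A (\<lambda>x::real^'s. \<Sum>j\<in>UNIV. lam j * (\<kappa>$j * (\<Prod>i\<in>UNIV. (x$i) ^ alpha i j)))"
  by (intro continuous_intros)

lemma jac_form:
  fixes alpha beta :: "'s::finite \<Rightarrow> 'r::finite \<Rightarrow> nat"
  assumes mg: "\<And>y. mass_action alpha beta \<kappa> y = g y *\<^sub>R v"
    and G: "(g has_derivative G) (at x)"
  shows "jacobian alpha beta \<kappa> x *v y = G y *\<^sub>R v"
proof -
  have lin: "linear G" using G has_derivative_linear by blast
  have J: "jacobian alpha beta \<kappa> x $ i $ l = v $ i * G (axis l 1)" for i l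
  proof -
    have "((\<lambda>t. g (\<chi> k. if k = l then t else x$k) * v $ i) has_real_derivative G (axis l 1) * v $ i) (at (x$l))"
      by (intro DERIV_cmult_right line_deriv G)
    then have "deriv (\<lambda>t. g (\<chi> k. if k = l then t else x$k) * v $ i) (x$l) = G (axis l 1) * v $ i"
      by (rule DERIV_imp_deriv)
    then show ?thesis by (simp add: jacobian_def mg mult.commute)
  qed
  have "(jacobian alpha beta \<kappa> x *v y) $ i = v $ i * G y" for i
  proof -
    have "(jacobian alpha beta \<kappa> x *v y) $ i = v $ i * (\<Sum>l\<in>UNIV. y $ l * G (axis l 1))"
      by (simp add: matrix_vector_mult_def J sum_distrib_left mult_ac)
    also have "(\<Sum>l\<in>UNIV. y $ l * G (axis l 1)) = G (\<Sum>l\<in>UNIV. y $ l *\<^sub>R axis l 1)"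
      by (simp add: linear_sum[OF lin] linear_scale[OF lin])
    also have "(\<Sum>l\<in>UNIV. y $ l *\<^sub>R axis l 1) = y"
      using basis_expansion[of y] by (simp add: scalar_mult_eq_scaleR)
    finally show ?thesis .
  qed
  then show ?thesis by (simp add: vec_eq_iff mult.commute)
qed

lemma stable_neg:
  fixes alpha beta :: "'s::finite \<Rightarrow> 'r::finite \<Rightarrow> nat"
  assumes mg: "\<And>y. mass_action alpha beta \<kappa> y = g y *\<^sub>R v"
    and G: "(g has_derivative G) (at x)"
    and S: "stoich_space alpha beta = range (\<lambda>s. s *\<^sub>R v)"
    and v0: "v \<noteq> 0"
    and st: "stable_steady_state alpha beta \<kappa> x"
  shows "G v < 0"
proof -
  have lin: "linear G" using G has_derivative_linear by blast
  let ?J = "jacobian alpha beta \<kappa> x"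
  have Jy: "\<And>y. ?J *v y = G y *\<^sub>R v" using jac_form[OF mg G] .
  have "v \<in> (\<lambda>y. ?J *v y) ` stoich_space alpha beta"
    using st S unfolding stable_steady_state_def nondegenerate_def by (metis rangeI scaleR_one)
  then obtain u where u: "u \<in> stoich_space alpha beta" "v = ?J *v u" by blast
  then obtain s where "u = s *\<^sub>R v" using S by blast
  moreover have "v = G u *\<^sub>R v" using u(2) Jy by metis
  ultimately have "v = (s * G v) *\<^sub>R v" using linear_scale[OF lin] by simp
  then have Gv: "G v \<noteq> 0" using v0 by (metis mult_zero_right scale_zero_left)
  have eig: "is_eigenvalue ?J (complex_of_real (G v))"
    unfolding is_eigenvalue_def
  proof (intro exI conjI)
    show "(\<chi> i. complex_of_real (v $ i)) \<noteq> 0" using v0 by (auto simp: vec_eq_iff)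
    have "(\<chi> i j. complex_of_real (?J $ i $ j)) *v (\<chi> i. complex_of_real (v $ i))
        = (\<chi> i. complex_of_real ((?J *v v) $ i))"
      by (simp add: matrix_vector_mult_def vec_eq_iff)
    also have "\<dots> = complex_of_real (G v) *s (\<chi> i. complex_of_real (v $ i))"
      by (simp add: Jy vec_eq_iff)
    finally show "(\<chi> i j. complex_of_real (?J $ i $ j)) *v (\<chi> i. complex_of_real (v $ i))
        = complex_of_real (G v) *s (\<chi> i. complex_of_real (v $ i))" .
  qed
  then show ?thesis using st Gv unfolding stable_steady_state_def by force
qed


theorem corollary5p6:
  fixes alpha beta :: "'s::finite \<Rightarrow> 'r::finite \<Rightarrow> nat"
    and a :: 's and r1 :: 'r
    and \<kappa> :: "real^'r" and c :: "'s \<Rightarrow> real"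
    and n :: nat and xs :: "nat \<Rightarrow> real^'s"
  assumes "valid_network alpha beta"
    and "dim (stoich_space alpha beta) = 1"
    and "stoich_matrix alpha beta $ a $ r1 \<noteq> 0"
    and "\<forall>j. \<kappa>$j > 0"
    and "{x \<in> compat_class alpha beta a r1 c. positive_steady_state alpha beta \<kappa> x} = xs ` {1..n}"
    and "\<forall>i. 1 \<le> i \<and> i < n \<longrightarrow> xs i $ a < xs (Suc i) $ a"
  shows "(\<forall>i. 1 \<le> i \<and> i < n \<longrightarrow>
            \<not> (stable_steady_state alpha beta \<kappa> (xs i) \<and> stable_steady_state alpha beta \<kappa> (xs (Suc i))))
       \<and> card {i \<in> {1..n}. stable_steady_state alpha beta \<kappa> (xs i)} \<le> nat \<lceil>real n / 2\<rceil>"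
proof -
  define v where "v = (\<chi> i. stoich_matrix alpha beta $ i $ r1)"
  have va: "v $ a \<noteq> 0" using assms(3) by (simp add: v_def)
  have v0: "v \<noteq> 0" using va by auto
  have S: "stoich_space alpha beta = range (\<lambda>s. s *\<^sub>R v)"
    using stoich_struct(1)[OF assms(2,3)] by (simp add: v_def)
  obtain lam where lam: "\<forall>i j. stoich_matrix alpha beta $ i $ j = lam j * v $ i"
    using stoich_struct(2)[OF assms(2,3)] by (auto simp: v_def)
  define g where "g = (\<lambda>x::real^'s. \<Sum>j\<in>UNIV. lam j * (\<kappa>$j * (\<Prod>i\<in>UNIV. (x$i) ^ alpha i j)))"
  have mg: "\<And>y. mass_action alpha beta \<kappa> y = g y *\<^sub>R v"
    using mass_g[OF lam] by (simp add: g_def)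
  have Gex: "\<exists>G. (g has_derivative G) (at y)" for y
    unfolding g_def by (rule g_diff)
  have stneg: "G v < 0" if "stable_steady_state alpha beta \<kappa> y" "(g has_derivative G) (at y)" for y G
    using stable_neg[OF mg that(2) S v0 that(1)] .
  have g0: "g y = 0" if "steady_state alpha beta \<kappa> y" for y
    using that mg[of y] v0 unfolding steady_state_def by simp
  have mono: "xs k $ a < xs m $ a" if "1 \<le> k" "k < m" "m \<le> n" for k m
    using that
  proof (induction m)
    case 0 then show ?case by simp
  next
    case (Suc m)
    show ?case
    proof (cases "k = m")
      case True then show ?thesis using Suc.prems assms(6) by auto
    next
      case False
      then have "xs k $ a < xs m $ a" using Suc by auto
      also have "\<dots> < xs (Suc m) $ a" using assms(6) Suc.prems by auto
      finally show ?thesis .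
    qed
  qed
  let ?P = "{x \<in> compat_class alpha beta a r1 c. positive_steady_state alpha beta \<kappa> x}"
  have partA: "\<not> (stable_steady_state alpha beta \<kappa> (xs i) \<and> stable_steady_state alpha beta \<kappa> (xs (Suc i)))"
    if i: "1 \<le> i" "i < n" for i
  proof
    assume st: "stable_steady_state alpha beta \<kappa> (xs i) \<and> stable_steady_state alpha beta \<kappa> (xs (Suc i))"
    define x1 where "x1 = xs i"
    define x2 where "x2 = xs (Suc i)"
    have x1P: "x1 \<in> ?P" using i assms(5) unfolding x1_def by auto
    have x2P: "x2 \<in> ?P" using i assms(5) unfolding x2_def by auto
    have lt: "x1 $ a < x2 $ a" using assms(6) i by (simp add: x1_def x2_def)
    define d where "d = x2 - x1"
    define s where "s = d $ a / v $ a"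
    have cc: "\<And>k. k \<noteq> a \<Longrightarrow> v $ k * x1 $ a - v $ a * x1 $ k = c k"
             "\<And>k. k \<noteq> a \<Longrightarrow> v $ k * x2 $ a - v $ a * x2 $ k = c k"
      using x1P x2P by (auto simp: compat_class_def v_def)
    have dsv: "d = s *\<^sub>R v"
    proof -
      have "d $ k = s * v $ k" for k
      proof (cases "k = a")
        case True then show ?thesis using va by (simp add: s_def)
      next
        case False
        from cc(1)[OF False] cc(2)[OF False]
        have "v $ a * d $ k = v $ k * d $ a" by (simp add: d_def algebra_simps)
        then show ?thesis using va by (simp add: s_def field_simps)
      qed
      then show ?thesis by (simp add: vec_eq_iff)
    qed
    have s0: "s \<noteq> 0" using lt va by (simp add: s_def d_def)
    define psi where "psi = (\<lambda>t. g (x1 + t *\<^sub>R d) / s)"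
    have psider: "(psi has_real_derivative G v) (at t)"
      if "(g has_derivative G) (at (x1 + t *\<^sub>R d))" for t G
    proof -
      have lin: "linear G" using that has_derivative_linear by blast
      have "(psi has_real_derivative G d / s) (at t)"
        unfolding psi_def by (intro DERIV_cdivide segment_deriv that)
      moreover have "G d / s = G v" using s0 by (simp add: dsv linear_scale[OF lin])
      ultimately show ?thesis by simp
    qed
    have x1d: "x1 + 0 *\<^sub>R d = x1" "x1 + 1 *\<^sub>R d = x2" by (auto simp: d_def)
    obtain G1 where G1: "(g has_derivative G1) (at x1)" using Gex by blast
    obtain G2 where G2: "(g has_derivative G2) (at x2)" using Gex by blast
    have D1: "(psi has_real_derivative G1 v) (at 0)" using psider[where t=0 and G=G1] G1 x1d by simp
    have D2: "(psi has_real_derivative G2 v) (at 1)" using psider[where t=1 and G=G2] G2 x1d by simp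
    have n1: "G1 v < 0" using stneg[OF _ G1] st by (simp add: x1_def)
    have n2: "G2 v < 0" using stneg[OF _ G2] st by (simp add: x2_def)
    have p0: "psi 0 = 0" using g0 x1P x1d by (simp add: psi_def positive_steady_state_def)
    have p1: "psi 1 = 0" using g0 x2P x1d by (simp add: psi_def positive_steady_state_def)
    obtain e1 where e1: "e1 > 0" "\<forall>h>0. h < e1 \<longrightarrow> psi 0 > psi (0 + h)"
      using DERIV_neg_dec_right[OF D1 n1] by blast
    obtain e2 where e2: "e2 > 0" "\<forall>h>0. h < e2 \<longrightarrow> psi 1 < psi (1 - h)"
      using DERIV_neg_dec_left[OF D2 n2] by blast
    define t1 where "t1 = min e1 (1/2) / 2"
    define t2 where "t2 = 1 - min e2 (1/2) / 2"
    have t1: "0 < t1" "t1 < e1" "t1 \<le> 1/4" using e1 by (auto simp: t1_def min_def)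
    have t2: "t2 < 1" "1 - t2 < e2" "3/4 \<le> t2" using e2 by (auto simp: t2_def min_def)
    have "psi t1 < 0" using e1 t1 p0 by auto
    moreover have "psi t2 > 0" using e2(2)[rule_format, of "1 - t2"] t2 p1 by auto
    moreover have "continuous_on {t1..t2} psi"
      unfolding psi_def g_def by (intro continuous_intros) (auto simp: s0)
    ultimately obtain r where r: "t1 \<le> r" "r \<le> t2" "psi r = 0"
      using IVT'[of psi t1 0 t2] t1 t2 by force
    have r01: "0 < r" "r < 1" using r t1 t2 by auto
    define y where "y = x1 + r *\<^sub>R d"
    have ycomp: "y $ k = (1 - r) * x1 $ k + r * x2 $ k" for k
      by (simp add: y_def d_def algebra_simps)
    have x1pos: "\<forall>k. x1 $ k > 0" and x2pos: "\<forall>k. x2 $ k > 0"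
      using x1P x2P by (auto simp: positive_steady_state_def)
    have ypos: "y $ k > 0" for k
    proof -
      have "(1 - r) * x1 $ k \<ge> 0" using r01 x1pos by (simp add: less_imp_le)
      moreover have "r * x2 $ k > 0" using r01 x2pos by simp
      ultimately show ?thesis using ycomp by simp
    qed
    have gy: "g y = 0" using r(3) s0 by (simp add: psi_def y_def)
    have yP: "y \<in> ?P"
    proof -
      have "v $ k * y $ a - v $ a * y $ k = c k" if "k \<noteq> a" for k
      proof -
        have "v $ k * y $ a - v $ a * y $ k = v $ k * x1 $ a - v $ a * x1 $ k"
          by (simp add: y_def dsv algebra_simps)
        then show ?thesis using cc(1)[OF that] by simp
      qed
      then show ?thesis using ypos gy
        by (auto simp: compat_class_def v_def positive_steady_state_def steady_state_def mg less_imp_le)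
    qed
    then obtain k where k: "k \<in> {1..n}" "y = xs k" using assms(5) by blast
    have h1: "r * (x2$a - x1$a) > 0" and h2: "(1-r)*(x2$a - x1$a) > 0" using r01 lt by simp_all
    have ya: "x1 $ a < y $ a" "y $ a < x2 $ a" using ycomp[of a] h1 h2
      by (simp_all add: algebra_simps)
    show False
    proof (cases "k \<le> i")
      case True
      then have "xs k $ a \<le> xs i $ a" using mono[of k i] k i by (cases "k = i") auto
      then show False using ya k by (simp add: x1_def)
    next
      case False
      then have "xs (Suc i) $ a \<le> xs k $ a" using mono[of "Suc i" k] k i by (cases "k = Suc i") auto
      then show False using ya k by (simp add: x2_def)
    qed
  qed
  show ?thesis
  proof
    show "\<forall>i. 1 \<le> i \<and> i < n \<longrightarrow>
            \<not> (stable_steady_state alpha beta \<kappa> (xs i) \<and> stable_steady_state alpha beta \<kappa> (xs (Suc i)))"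
      using partA by blast
    show "card {i \<in> {1..n}. stable_steady_state alpha beta \<kappa> (xs i)} \<le> nat \<lceil>real n / 2\<rceil>"
    proof (rule card_no_consec)
      show "{i \<in> {1..n}. stable_steady_state alpha beta \<kappa> (xs i)} \<subseteq> {1..n}" by auto
      fix i assume "i \<in> {i \<in> {1..n}. stable_steady_state alpha beta \<kappa> (xs i)}"
      then show "Suc i \<notin> {i \<in> {1..n}. stable_steady_state alpha beta \<kappa> (xs i)}"
        using partA[of i] by auto
    qed
  qed
qed

end
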